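(* Let $A$ be an integral domain and $B$ an overring of $A$ that is flat over $A$ and well-centered on $A$. If there exists a finite set $\mathcal F$ of height-one prime ideals of $A$ such that $A=B\cap\bigcap_{P\in\mathcal F}A_P$, then $B$ is a localization of $A$.
   Context: For an integral domain $A$ with field of fractions $K$, an overring is a subring of $K$ containing $A$. $B$ is well-centered on $A$ if for each $b\in B$ there is a unit $u$ of $B$ with $ub\in A$. $B$ is a localization of $A$ if $B=S^{-1}A$ for a multiplicatively closed set $S$ of nonzero elements of $A$. *)

theory Defs
  imports Main
begin

text \<open>All rings are subrings of a fixed field K (the type 'k).\<close>

definition subring :: "'k::field set \<Rightarrow> bool" where
  "subring R \<longleftrightarrow> 0 \<in> R \<and> 1 \<in> R \<and>
     (\<forall>x\<in>R. \<forall>y\<in>R. x + y \<in> R \<and> - x \<in> R \<and> x * y \<in> R)"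

definition is_fraction_field_of :: "'k::field set \<Rightarrow> bool" where
  "is_fraction_field_of A \<longleftrightarrow> (\<forall>x::'k. \<exists>a\<in>A. \<exists>b\<in>A. b \<noteq> 0 \<and> x = a / b)"

definition overring :: "'k::field set \<Rightarrow> 'k set \<Rightarrow> bool" where
  "overring A B \<longleftrightarrow> subring B \<and> A \<subseteq> B"

definition unit_of :: "'k::field set \<Rightarrow> 'k \<Rightarrow> bool" where
  "unit_of B u \<longleftrightarrow> u \<in> B \<and> u \<noteq> 0 \<and> inverse u \<in> B"

definition well_centered :: "'k::field set \<Rightarrow> 'k set \<Rightarrow> bool" where
  "well_centered A B \<longleftrightarrow> (\<forall>b\<in>B. \<exists>u. unit_of B u \<and> u * b \<in> A)"

text \<open>Flatness of B as an A-module, via the equational criterion of flatness: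
  every A-linear relation among elements of B is trivial.\<close>
definition flat_over :: "'k::field set \<Rightarrow> 'k set \<Rightarrow> bool" where
  "flat_over A B \<longleftrightarrow>
    (\<forall>(n::nat) (a::nat \<Rightarrow> 'k) (b::nat \<Rightarrow> 'k).
       (\<forall>i<n. a i \<in> A \<and> b i \<in> B) \<and> (\<Sum>i<n. a i * b i) = 0 \<longrightarrow>
       (\<exists>(m::nat) (c::nat \<Rightarrow> nat \<Rightarrow> 'k) (d::nat \<Rightarrow> 'k).
          (\<forall>i<n. \<forall>j<m. c i j \<in> A) \<and> (\<forall>j<m. d j \<in> B) \<and>
          (\<forall>i<n. b i = (\<Sum>j<m. c i j * d j)) \<and>
          (\<forall>j<m. (\<Sum>i<n. a i * c i j) = 0)))"

definition ideal_of :: "'k::field set \<Rightarrow> 'k set \<Rightarrow> bool" where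
  "ideal_of A P \<longleftrightarrow> P \<subseteq> A \<and> 0 \<in> P \<and>
     (\<forall>x\<in>P. \<forall>y\<in>P. x + y \<in> P) \<and> (\<forall>a\<in>A. \<forall>x\<in>P. a * x \<in> P)"

definition prime_ideal_of :: "'k::field set \<Rightarrow> 'k set \<Rightarrow> bool" where
  "prime_ideal_of A P \<longleftrightarrow> ideal_of A P \<and> P \<noteq> A \<and>
     (\<forall>x\<in>A. \<forall>y\<in>A. x * y \<in> P \<longrightarrow> x \<in> P \<or> y \<in> P)"

definition height_one_prime :: "'k::field set \<Rightarrow> 'k set \<Rightarrow> bool" where
  "height_one_prime A P \<longleftrightarrow> prime_ideal_of A P \<and> P \<noteq> {0} \<and>
     (\<forall>Q. prime_ideal_of A Q \<and> Q \<subseteq> P \<longrightarrow> Q = {0} \<or> Q = P)"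

definition loc_at :: "'k::field set \<Rightarrow> 'k set \<Rightarrow> 'k set" where
  "loc_at A S = {a / s | a s. a \<in> A \<and> s \<in> S}"

definition mult_closed_nonzero :: "'k::field set \<Rightarrow> 'k set \<Rightarrow> bool" where
  "mult_closed_nonzero A S \<longleftrightarrow> S \<subseteq> A \<and> 0 \<notin> S \<and> 1 \<in> S \<and>
     (\<forall>x\<in>S. \<forall>y\<in>S. x * y \<in> S)"

definition loc_prime :: "'k::field set \<Rightarrow> 'k set \<Rightarrow> 'k set" where
  "loc_prime A P = loc_at A (A - P)"

definition is_localization :: "'k::field set \<Rightarrow> 'k set \<Rightarrow> bool" where
  "is_localization A B \<longleftrightarrow> (\<exists>S. mult_closed_nonzero A S \<and> B = loc_at A S)"

end

theory Submission
  imports Defs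
begin

lemma sr0: "subring R \<Longrightarrow> 0 \<in> R" by (simp add: subring_def)
lemma sr1: "subring R \<Longrightarrow> 1 \<in> R" by (simp add: subring_def)
lemma sradd: "subring R \<Longrightarrow> x \<in> R \<Longrightarrow> y \<in> R \<Longrightarrow> x + y \<in> R" by (simp add: subring_def)
lemma srneg: "subring R \<Longrightarrow> x \<in> R \<Longrightarrow> - x \<in> R" by (simp add: subring_def)
lemma srmul: "subring R \<Longrightarrow> x \<in> R \<Longrightarrow> y \<in> R \<Longrightarrow> x * y \<in> R" by (simp add: subring_def)
lemma srdiff: "subring R \<Longrightarrow> x \<in> R \<Longrightarrow> y \<in> R \<Longrightarrow> x - y \<in> R"
  using sradd[of R x "- y"] srneg[of R y] by simp

lemma prime_exists:
  fixes R :: "'k::field set"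
  assumes R: "subring R" and I: "ideal_of R I" and MR: "M \<subseteq> R" and M1: "1 \<in> M"
    and Mm: "\<forall>x\<in>M. \<forall>y\<in>M. x * y \<in> M" and IM: "I \<inter> M = {}"
  shows "\<exists>P. prime_ideal_of R P \<and> I \<subseteq> P \<and> P \<inter> M = {}"
proof -
  let ?C = "{J. ideal_of R J \<and> I \<subseteq> J \<and> J \<inter> M = {}}"
  have "\<exists>P\<in>?C. \<forall>X\<in>?C. P \<subseteq> X \<longrightarrow> X = P"
  proof (rule subset_Zorn_nonempty)
    show "?C \<noteq> {}" using I IM by auto
  next
    fix C assume ne: "C \<noteq> {}" and ch: "subset.chain ?C C"
    hence sub: "C \<subseteq> ?C" and tot: "\<forall>X\<in>C. \<forall>Y\<in>C. X \<subseteq> Y \<or> Y \<subseteq> X"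
      by (auto simp: subset_chain_def)
    have "ideal_of R (\<Union>C)"
      unfolding ideal_of_def
    proof (intro conjI ballI)
      show "\<Union>C \<subseteq> R" using sub by (auto simp: ideal_of_def)
      show "0 \<in> \<Union>C" using sub ne by (auto simp: ideal_of_def)
    next
      fix x y assume "x \<in> \<Union>C" "y \<in> \<Union>C"
      then obtain X Y where "X \<in> C" "Y \<in> C" "x \<in> X" "y \<in> Y" by auto
      with tot have "(x \<in> X \<and> y \<in> X \<and> X \<in> C) \<or> (x \<in> Y \<and> y \<in> Y \<and> Y \<in> C)" by blast
      thus "x + y \<in> \<Union>C" using sub unfolding ideal_of_def by blast
    next
      fix a x assume "a \<in> R" "x \<in> \<Union>C"
      then obtain X where "X \<in> C" "x \<in> X" by blast
      thus "a * x \<in> \<Union>C" using sub \<open>a \<in> R\<close> unfolding ideal_of_def by blast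
    qed
    moreover have "I \<subseteq> \<Union>C" using ne sub by auto
    moreover have "\<Union>C \<inter> M = {}" using sub by auto
    ultimately show "\<Union>C \<in> ?C" by auto
  qed
  then obtain P where P: "P \<in> ?C" and mx: "\<forall>X\<in>?C. P \<subseteq> X \<longrightarrow> X = P" by blast
  have PR: "P \<subseteq> R" and P0: "0 \<in> P" and Padd: "\<forall>x\<in>P. \<forall>y\<in>P. x + y \<in> P"
    and Pmul: "\<forall>a\<in>R. \<forall>x\<in>P. a * x \<in> P"
    using P by (auto simp: ideal_of_def)
  have PM: "P \<inter> M = {}" and IP: "I \<subseteq> P" and Pid: "ideal_of R P" using P by auto
  have ext: "\<exists>p\<in>P. \<exists>r\<in>R. p + r * x \<in> M" if x: "x \<in> R" "x \<notin> P" for x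
  proof (rule ccontr)
    assume nx: "\<not> ?thesis"
    let ?J = "{p + r * x | p r. p \<in> P \<and> r \<in> R}"
    have "ideal_of R ?J"
      unfolding ideal_of_def
    proof (intro conjI ballI)
      show "?J \<subseteq> R" using PR x R by (auto intro!: sradd srmul)
      have "0 = 0 + 0 * x" by simp
      thus "0 \<in> ?J" using P0 sr0[OF R] by blast
    next
      fix u v assume "u \<in> ?J" "v \<in> ?J"
      then obtain p r p' r' where "u = p + r * x" "v = p' + r' * x" "p \<in> P" "r \<in> R" "p' \<in> P" "r' \<in> R" by blast
      moreover have "u + v = (p + p') + (r + r') * x" using calculation by (simp add: algebra_simps)
      moreover have "p + p' \<in> P" "r + r' \<in> R" using calculation Padd sradd[OF R] by auto
      ultimately show "u + v \<in> ?J" by blast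
    next
      fix a u assume "a \<in> R" "u \<in> ?J"
      then obtain p r where "u = p + r * x" "p \<in> P" "r \<in> R" by blast
      moreover have "a * u = a * p + (a * r) * x" using calculation by (simp add: algebra_simps)
      moreover have "a * p \<in> P" "a * r \<in> R" using calculation Pmul srmul[OF R] \<open>a \<in> R\<close> by auto
      ultimately show "a * u \<in> ?J" by blast
    qed
    moreover have "P \<subseteq> ?J"
    proof
      fix p assume "p \<in> P"
      moreover have "p = p + 0 * x" by simp
      ultimately show "p \<in> ?J" using sr0[OF R] by blast
    qed
    moreover have "?J \<inter> M = {}" using nx by blast
    moreover have "x \<in> ?J"
    proof -
      have "x = 0 + 1 * x" by simp
      thus ?thesis using P0 sr1[OF R] by blast
    qed
    ultimately have "?J \<in> ?C" using IP by (intro CollectI conjI; blast)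
    from mx[rule_format, OF this \<open>P \<subseteq> ?J\<close>] have "?J = P" .
    thus False using \<open>x \<in> ?J\<close> x by simp
  qed
  have "prime_ideal_of R P"
    unfolding prime_ideal_of_def
  proof (intro conjI ballI impI)
    show "ideal_of R P" using Pid .
    show "P \<noteq> R" using PM M1 MR by auto
  next
    fix x y assume xy: "x \<in> R" "y \<in> R" "x * y \<in> P"
    show "x \<in> P \<or> y \<in> P"
    proof (rule ccontr)
      assume "\<not> ?thesis"
      hence "x \<notin> P" "y \<notin> P" by auto
      from ext[OF xy(1) this(1)] obtain p r where A1: "p \<in> P" "r \<in> R" "p + r * x \<in> M" by blast
      from ext[OF xy(2) \<open>y \<notin> P\<close>] obtain p' r' where A2: "p' \<in> P" "r' \<in> R" "p' + r' * y \<in> M" by blast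
      note A = A1 A2
      have "(p + r * x) * (p' + r' * y) \<in> M" using A Mm by blast
      moreover have "(p + r * x) * (p' + r' * y) = (p' + r' * y) * p + (r * p') * x + (r * r') * (x * y)"
        by (simp add: algebra_simps)
      moreover have "(p' + r' * y) * p + (r * p') * x + (r * r') * (x * y) \<in> P"
      proof -
        have "p' + r' * y \<in> R" using A MR by blast
        hence 1: "(p' + r' * y) * p \<in> P" using Pmul A by blast
        have "r * p' \<in> P" using Pmul A by blast
        hence 2: "(r * p') * x \<in> P" using Pmul xy by (metis mult.commute)
        have "r * r' \<in> R" using srmul[OF R] A by blast
        hence 3: "(r * r') * (x * y) \<in> P" using Pmul xy by blast
        show ?thesis using 1 2 3 Padd by blast
      qed
      ultimately have "(p + r * x) * (p' + r' * y) \<in> P \<inter> M" by simp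
      thus False using PM by simp
    qed
  qed
  thus ?thesis using PM IP by blast
qed

lemma srpow: "subring R \<Longrightarrow> x \<in> R \<Longrightarrow> x ^ n \<in> R"
  by (induction n) (auto intro: srmul sr1)

lemma idl_sub: "ideal_of A P \<Longrightarrow> P \<subseteq> A" by (simp add: ideal_of_def)
lemma idl0: "ideal_of A P \<Longrightarrow> 0 \<in> P" by (simp add: ideal_of_def)
lemma idladd: "ideal_of A P \<Longrightarrow> x \<in> P \<Longrightarrow> y \<in> P \<Longrightarrow> x + y \<in> P" by (simp add: ideal_of_def)
lemma idlmul: "ideal_of A P \<Longrightarrow> a \<in> A \<Longrightarrow> x \<in> P \<Longrightarrow> a * x \<in> P" by (simp add: ideal_of_def)
lemma idlmul2: "ideal_of A P \<Longrightarrow> a \<in> A \<Longrightarrow> x \<in> P \<Longrightarrow> x * a \<in> P"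
  using idlmul[of A P a x] by (simp add: mult.commute)
lemma idldiff: "subring A \<Longrightarrow> ideal_of A P \<Longrightarrow> x \<in> P \<Longrightarrow> y \<in> P \<Longrightarrow> x - y \<in> P"
proof -
  assume R: "subring A" and I: "ideal_of A P" and xy: "x \<in> P" "y \<in> P"
  have "- 1 \<in> A" using R by (simp add: srneg sr1)
  hence "(- 1) * y \<in> P" using idlmul[OF I] xy by blast
  hence "x + (- 1) * y \<in> P" using idladd[OF I] xy by blast
  thus ?thesis by simp
qed

lemma idlsum: "ideal_of A P \<Longrightarrow> (\<forall>j<(m::nat). f j \<in> P) \<Longrightarrow> (\<Sum>j<m. f j) \<in> P"
proof (induction m)
  case 0 thus ?case by (simp add: idl0)
next
  case (Suc m) thus ?case by (simp add: idladd)
qed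

lemma prime_1: "prime_ideal_of A P \<Longrightarrow> subring A \<Longrightarrow> 1 \<notin> P"
proof
  assume P: "prime_ideal_of A P" and R: "subring A" and "1 \<in> P"
  hence "\<forall>a\<in>A. a * 1 \<in> P" unfolding prime_ideal_of_def ideal_of_def by blast
  hence "A \<subseteq> P" by auto
  moreover have "P \<subseteq> A" using P unfolding prime_ideal_of_def ideal_of_def by blast
  ultimately show False using P unfolding prime_ideal_of_def by blast
qed

lemma primeD: "prime_ideal_of A P \<Longrightarrow> x \<in> A \<Longrightarrow> y \<in> A \<Longrightarrow> x * y \<in> P \<Longrightarrow> x \<in> P \<or> y \<in> P"
  unfolding prime_ideal_of_def by blast

lemma prime_idl: "prime_ideal_of A P \<Longrightarrow> ideal_of A P"
  unfolding prime_ideal_of_def by blast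

lemma L1: "a \<in> A \<Longrightarrow> r \<in> A \<Longrightarrow> r \<notin> Q \<Longrightarrow> a / r \<in> loc_prime A Q"
  unfolding loc_prime_def loc_at_def by blast

lemma L2: "subring A \<Longrightarrow> prime_ideal_of A Q \<Longrightarrow> a \<in> A \<Longrightarrow> a \<in> loc_prime A Q"
  using L1[of a A 1 Q] prime_1[of A Q] sr1[of A] by simp

lemma L3: "subring A \<Longrightarrow> a \<in> A \<Longrightarrow> x \<in> loc_prime A Q \<Longrightarrow> a * x \<in> loc_prime A Q"
proof -
  assume R: "subring A" "a \<in> A" "x \<in> loc_prime A Q"
  then obtain c r where "c \<in> A" "r \<in> A" "r \<notin> Q" "x = c / r"
    unfolding loc_prime_def loc_at_def by blast
  moreover have "a * (c / r) = (a * c) / r" by simp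
  ultimately show ?thesis using L1[of "a * c" A r Q] srmul[OF R(1) R(2)] by simp
qed

lemma heightD: "height_one_prime A P \<Longrightarrow> prime_ideal_of A Q \<Longrightarrow> Q \<subseteq> P \<Longrightarrow> Q = {0} \<or> Q = P"
  unfolding height_one_prime_def by blast

lemma L4:
  fixes A :: "'k::field set"
  assumes R: "subring A" and FF: "is_fraction_field_of A" and H: "height_one_prime A Q"
    and s: "s \<in> Q"
  shows "\<exists>n. s ^ n * x \<in> loc_prime A Q"
proof -
  have PQ: "prime_ideal_of A Q" using H unfolding height_one_prime_def by blast
  have IQ: "ideal_of A Q" using PQ by (rule prime_idl)
  have QA: "Q \<subseteq> A" using IQ by (rule idl_sub)
  obtain a b where ab: "a \<in> A" "b \<in> A" "b \<noteq> 0" "x = a / b" using FF unfolding is_fraction_field_of_def by blast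
  show ?thesis
  proof (cases "b \<in> Q")
    case False
    hence "s ^ 0 * x \<in> loc_prime A Q" using L1[of a A b Q] ab by simp
    thus ?thesis by blast
  next
    case bQ: True
    let ?M = "{r * s ^ n | r n. r \<in> A \<and> r \<notin> Q}"
    let ?I = "{b * c | c. c \<in> A}"
    show ?thesis
    proof (cases "\<exists>c\<in>A. \<exists>r\<in>A. \<exists>n. r \<notin> Q \<and> b * c = r * s ^ n")
      case True
      then obtain c r n where crn: "c \<in> A" "r \<in> A" "r \<notin> Q" "b * c = r * s ^ n" by blast
      have r0: "r \<noteq> 0" using crn(3) idl0[OF IQ] by auto
      have "s ^ n * x = (c * a) / r"
        using crn(4) r0 ab(3) ab(4) by (simp add: field_simps) (metis mult.commute mult.left_commute)
      moreover have "c * a \<in> A" using srmul[OF R crn(1) ab(1)] .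
      ultimately have "s ^ n * x \<in> loc_prime A Q" using L1[of "c * a" A r Q] crn by simp
      thus ?thesis by blast
    next
      case False
      have sA: "s \<in> A" using s QA by blast
      have Iid: "ideal_of A ?I"
        unfolding ideal_of_def
      proof (intro conjI ballI)
        show "?I \<subseteq> A" using ab R by (auto intro: srmul)
        have "0 = b * 0" by simp
        thus "0 \<in> ?I" using sr0[OF R] by blast
      next
        fix u v assume "u \<in> ?I" "v \<in> ?I"
        then obtain c d where "u = b * c" "v = b * d" "c \<in> A" "d \<in> A" by blast
        moreover have "u + v = b * (c + d)" using calculation by (simp add: algebra_simps)
        ultimately show "u + v \<in> ?I" using sradd[OF R] by blast
      next
        fix e u assume "e \<in> A" "u \<in> ?I"
        then obtain c where "u = b * c" "c \<in> A" by blast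
        moreover have "e * u = b * (e * c)" using calculation by (simp add: algebra_simps)
        ultimately show "e * u \<in> ?I" using srmul[OF R] \<open>e \<in> A\<close> by blast
      qed
      have MA: "?M \<subseteq> A" using sA R by (auto intro: srmul srpow)
      have M1: "1 \<in> ?M"
      proof -
        have "(1::'k) = 1 * s ^ 0" by simp
        thus ?thesis using sr1[OF R] prime_1[OF PQ R] by blast
      qed
      have Mm: "\<forall>u\<in>?M. \<forall>v\<in>?M. u * v \<in> ?M"
      proof (intro ballI)
        fix u v assume "u \<in> ?M" "v \<in> ?M"
        then obtain r1 n1 r2 n2 where "u = r1 * s ^ n1" "v = r2 * s ^ n2" "r1 \<in> A" "r1 \<notin> Q" "r2 \<in> A" "r2 \<notin> Q" by blast
        moreover have "u * v = (r1 * r2) * s ^ (n1 + n2)" using calculation by (simp add: power_add algebra_simps)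
        moreover have "r1 * r2 \<in> A" using calculation srmul[OF R] by blast
        moreover have "r1 * r2 \<notin> Q" using calculation primeD[OF PQ] by blast
        ultimately show "u * v \<in> ?M" by blast
      qed
      have IM: "?I \<inter> ?M = {}" using False by blast
      obtain P where P: "prime_ideal_of A P" "?I \<subseteq> P" "P \<inter> ?M = {}"
        using prime_exists[OF R Iid MA M1 Mm IM] by blast
      have PA: "P \<subseteq> A" using P(1) prime_idl idl_sub by blast
      have "P \<subseteq> Q"
      proof
        fix p assume "p \<in> P"
        show "p \<in> Q"
        proof (rule ccontr)
          assume "p \<notin> Q"
          moreover have "p = p * s ^ 0" by simp
          ultimately have "p \<in> ?M" using PA \<open>p \<in> P\<close> by blast
          thus False using P(3) \<open>p \<in> P\<close> by blast
        qed
      qed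
      moreover have "b \<in> P"
      proof -
        have "b = b * 1" by simp
        hence "b \<in> ?I" using sr1[OF R] by blast
        thus ?thesis using P(2) by blast
      qed
      ultimately have "P = Q" using heightD[OF H P(1)] ab(3) by blast
      moreover have "s \<in> ?M"
      proof -
        have "s = 1 * s ^ 1" by simp
        thus ?thesis using sr1[OF R] prime_1[OF PQ R] by blast
      qed
      ultimately show ?thesis using P(3) s by blast
    qed
  qed
qed

lemma L5:
  fixes A B :: "'k::field set"
  assumes R: "subring A" and FF: "is_fraction_field_of A" and OV: "overring A B"
    and FL: "flat_over A B" and H: "height_one_prime A Q"
    and nB: "\<not> B \<subseteq> loc_prime A Q" and y: "y \<in> A" "y \<noteq> 0"
  shows "\<exists>t\<in>A. t \<notin> Q \<and> t / y \<in> B"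
proof (rule ccontr)
  assume nt: "\<not> ?thesis"
  have RB: "subring B" and AB: "A \<subseteq> B" using OV unfolding overring_def by auto
  have PQ: "prime_ideal_of A Q" using H unfolding height_one_prime_def by blast
  have IQ: "ideal_of A Q" using PQ by (rule prime_idl)
  have QA: "Q \<subseteq> A" using IQ by (rule idl_sub)
  obtain c where c: "c \<in> B" "c \<notin> loc_prime A Q" using nB by blast
  obtain x z where xz: "x \<in> A" "z \<in> A" "z \<noteq> 0" "c = x / z" using FF unfolding is_fraction_field_of_def by blast
  let ?M = "A - Q"
  let ?I = "{y * d | d. d \<in> B}"
  have Iid: "ideal_of B ?I"
    unfolding ideal_of_def
  proof (intro conjI ballI)
    show "?I \<subseteq> B" using y AB RB by (auto intro: srmul)
    have "0 = y * 0" by simp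
    thus "0 \<in> ?I" using sr0[OF RB] by blast
  next
    fix u v assume "u \<in> ?I" "v \<in> ?I"
    then obtain c d where "u = y * c" "v = y * d" "c \<in> B" "d \<in> B" by blast
    moreover have "u + v = y * (c + d)" using calculation by (simp add: algebra_simps)
    ultimately show "u + v \<in> ?I" using sradd[OF RB] by blast
  next
    fix e u assume "e \<in> B" "u \<in> ?I"
    then obtain c where "u = y * c" "c \<in> B" by blast
    moreover have "e * u = y * (e * c)" using calculation by (simp add: algebra_simps)
    ultimately show "e * u \<in> ?I" using srmul[OF RB] \<open>e \<in> B\<close> by blast
  qed
  have MB: "?M \<subseteq> B" using AB by blast
  have M1: "1 \<in> ?M" using sr1[OF R] prime_1[OF PQ R] by blast
  have Mm: "\<forall>u\<in>?M. \<forall>v\<in>?M. u * v \<in> ?M" using srmul[OF R] primeD[OF PQ] by blast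
  have IM: "?I \<inter> ?M = {}"
  proof (rule ccontr)
    assume "?I \<inter> ?M \<noteq> {}"
    then obtain d where d: "d \<in> B" "y * d \<in> A" "y * d \<notin> Q" by blast
    have "(y * d) / y = d" using y by simp
    thus False using nt d by metis
  qed
  obtain P where P: "prime_ideal_of B P" "?I \<subseteq> P" "P \<inter> ?M = {}"
    using prime_exists[OF RB Iid MB M1 Mm IM] by blast
  have IP: "ideal_of B P" using P(1) by (rule prime_idl)
  have PB: "P \<subseteq> B" using IP by (rule idl_sub)
  have 1: "1 \<notin> P" using prime_1[OF P(1) RB] .
  have "prime_ideal_of A (P \<inter> A)"
    unfolding prime_ideal_of_def ideal_of_def
  proof (intro conjI ballI impI)
    show "P \<inter> A \<subseteq> A" by blast
    show "0 \<in> P \<inter> A" using idl0[OF IP] sr0[OF R] by blast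
    show "P \<inter> A \<noteq> A" using 1 sr1[OF R] by blast
  next
    fix u v assume "u \<in> P \<inter> A" "v \<in> P \<inter> A"
    thus "u + v \<in> P \<inter> A" using idladd[OF IP] sradd[OF R] by blast
  next
    fix a u assume "a \<in> A" "u \<in> P \<inter> A"
    thus "a * u \<in> P \<inter> A" using idlmul[OF IP] srmul[OF R] AB by blast
  next
    fix u v assume "u \<in> A" "v \<in> A" "u * v \<in> P \<inter> A"
    thus "u \<in> P \<inter> A \<or> v \<in> P \<inter> A" using primeD[OF P(1)] AB by blast
  qed
  moreover have "P \<inter> A \<subseteq> Q" using P(3) by blast
  moreover have "y \<in> P \<inter> A"
  proof -
    have "y = y * 1" by simp
    hence "y \<in> ?I" using sr1[OF RB] by blast
    thus ?thesis using P(2) y by blast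
  qed
  ultimately have PAQ: "P \<inter> A = Q" using heightD[OF H] y(2) by blast
  let ?a = "\<lambda>i::nat. if i = 0 then x else - z"
  let ?b = "\<lambda>i::nat. if i = 0 then 1 else c"
  have hyp: "(\<forall>i<2. ?a i \<in> A \<and> ?b i \<in> B) \<and> (\<Sum>i<2. ?a i * ?b i) = 0"
    using xz c srneg[OF R] sr1[OF RB] by (simp add: numeral_2_eq_2 lessThan_Suc)
  obtain m cc d where cd: "\<forall>i<2. \<forall>j<m. cc i j \<in> A" "\<forall>j<m. d j \<in> B"
    "\<forall>i<2. ?b i = (\<Sum>j<m. cc i j * d j)" "\<forall>j<(m::nat). (\<Sum>i<2. ?a i * cc i j) = 0"
    using FL[unfolded flat_over_def, rule_format, OF hyp] by blast
  have one: "1 = (\<Sum>j<m. cc 0 j * d j)" using cd(3)[rule_format, of 0] by simp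
  have rel: "x * cc 0 j = z * cc 1 j" if "j < m" for j
    using cd(4) that by (simp add: numeral_2_eq_2 lessThan_Suc)
  have inQ: "cc 0 j \<in> Q" if j: "j < m" for j
  proof (rule ccontr)
    assume nq: "cc 0 j \<notin> Q"
    have ne: "cc 0 j \<noteq> 0" using nq idl0[OF IQ] by auto
    have cz: "c * z = x" using xz by simp
    have "z * (c * cc 0 j) = x * cc 0 j" by (simp add: cz[symmetric] ac_simps)
    hence "z * (c * cc 0 j) = z * cc 1 j" using rel[OF j] by simp
    hence "c * cc 0 j = cc 1 j" using xz(3) by simp
    hence "c = cc 1 j / cc 0 j" using ne by (simp add: field_simps)
    moreover have "cc 1 j \<in> A" "cc 0 j \<in> A" using cd(1) j by auto
    ultimately have "c \<in> loc_prime A Q" using L1 nq by metis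
    thus False using c by blast
  qed
  have "(\<Sum>j<m. cc 0 j * d j) \<in> P"
  proof (rule idlsum[OF IP], intro allI impI)
    fix j assume j: "j < m"
    have "cc 0 j \<in> P" using inQ[OF j] PAQ by blast
    thus "cc 0 j * d j \<in> P" using idlmul2[OF IP] cd(2) j by blast
  qed
  thus False using one 1 by simp
qed

lemma L6:
  fixes A :: "'k::field set"
  assumes R: "subring A" and fin: "finite G"
  shows "(\<forall>Q'\<in>G. height_one_prime A Q') \<longrightarrow> height_one_prime A Q \<longrightarrow> Q \<notin> G \<longrightarrow>
    (\<exists>z\<in>A. z \<notin> Q \<and> (\<forall>Q'\<in>G. z \<in> Q'))"
  using fin
proof (induction G rule: finite_induct)
  case empty
  show ?case
  proof (intro impI)
    assume "height_one_prime A Q"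
    hence "prime_ideal_of A Q" unfolding height_one_prime_def by blast
    thus "\<exists>z\<in>A. z \<notin> Q \<and> (\<forall>Q'\<in>{}. z \<in> Q')" using prime_1[OF _ R] sr1[OF R] by blast
  qed
next
  case (insert Q1 G)
  show ?case
  proof (intro impI)
    assume hG: "\<forall>Q'\<in>insert Q1 G. height_one_prime A Q'" and hQ: "height_one_prime A Q"
      and nQ: "Q \<notin> insert Q1 G"
    obtain z where z: "z \<in> A" "z \<notin> Q" "\<forall>Q'\<in>G. z \<in> Q'" using insert.IH hG hQ nQ by blast
    have H1: "height_one_prime A Q1" using hG by blast
    have P1: "prime_ideal_of A Q1" and n0: "Q1 \<noteq> {0}" using H1 unfolding height_one_prime_def by blast+
    have PQ: "prime_ideal_of A Q" using hQ unfolding height_one_prime_def by blast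
    have "\<not> Q1 \<subseteq> Q"
    proof
      assume "Q1 \<subseteq> Q"
      hence "Q1 = {0} \<or> Q1 = Q" using heightD[OF hQ P1] by blast
      thus False using n0 nQ by blast
    qed
    then obtain w where w: "w \<in> Q1" "w \<notin> Q" by blast
    have wA: "w \<in> A" using w(1) idl_sub[OF prime_idl[OF P1]] by blast
    have "z * w \<in> A" using srmul[OF R z(1) wA] .
    moreover have "z * w \<notin> Q" using primeD[OF PQ z(1) wA] z(2) w(2) by blast
    moreover have "z * w \<in> Q1" using idlmul[OF prime_idl[OF P1] z(1) w(1)] .
    moreover have "\<forall>Q'\<in>G. z * w \<in> Q'"
    proof
      fix Q' assume "Q' \<in> G"
      hence "prime_ideal_of A Q'" using hG unfolding height_one_prime_def by blast
      hence "ideal_of A Q'" by (rule prime_idl)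
      thus "z * w \<in> Q'" using idlmul2[of A Q' w z] z(3) \<open>Q' \<in> G\<close> wA by blast
    qed
    ultimately show "\<exists>z\<in>A. z \<notin> Q \<and> (\<forall>Q'\<in>insert Q1 G. z \<in> Q')" by blast
  qed
qed

lemma L7:
  fixes A B :: "'k::field set"
  assumes R: "subring A" and OV: "overring A B" and y: "y \<in> A" "y \<noteq> 0" and fin: "finite G"
  shows "(\<forall>Q\<in>G. height_one_prime A Q \<and> (\<exists>t\<in>A. t \<notin> Q \<and> t / y \<in> B)) \<longrightarrow>
    (\<exists>t\<in>A. t / y \<in> B \<and> (\<forall>Q\<in>G. t \<notin> Q))"
  using fin
proof (induction G rule: finite_induct)
  case empty
  have "y / y \<in> B" using y sr1[of B] OV unfolding overring_def by simp
  thus ?case using y by blast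
next
  case (insert Q G)
  have RB: "subring B" and AB: "A \<subseteq> B" using OV unfolding overring_def by auto
  show ?case
  proof
    assume h: "\<forall>Q'\<in>insert Q G. height_one_prime A Q' \<and> (\<exists>t\<in>A. t \<notin> Q' \<and> t / y \<in> B)"
    obtain t where t: "t \<in> A" "t / y \<in> B" "\<forall>Q'\<in>G. t \<notin> Q'" using insert.IH h by blast
    show "\<exists>t\<in>A. t / y \<in> B \<and> (\<forall>Q'\<in>insert Q G. t \<notin> Q')"
    proof (cases "t \<in> Q")
      case False thus ?thesis using t by blast
    next
      case tQ: True
      have hQ: "height_one_prime A Q" using h by blast
      have PQ: "prime_ideal_of A Q" using hQ unfolding height_one_prime_def by blast
      obtain tq where tq: "tq \<in> A" "tq \<notin> Q" "tq / y \<in> B" using h by blast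
      obtain z where z: "z \<in> A" "z \<notin> Q" "\<forall>Q'\<in>G. z \<in> Q'"
        using L6[OF R insert.hyps(1)] h insert.hyps(2) by blast
      let ?t = "t + z * tq"
      have "?t \<in> A" using t(1) z(1) tq(1) R by (blast intro: sradd srmul)
      moreover have "?t / y = t / y + z * (tq / y)" by (simp add: add_divide_distrib)
      hence "?t / y \<in> B" using t(2) tq(3) z(1) AB RB by (metis sradd srmul subsetD)
      moreover have "?t \<notin> Q"
      proof
        assume "?t \<in> Q"
        hence "?t - t \<in> Q" using idldiff[OF R prime_idl[OF PQ]] tQ by blast
        hence "z * tq \<in> Q" by simp
        thus False using primeD[OF PQ z(1) tq(1)] z(2) tq(2) by blast
      qed
      moreover have "\<forall>Q'\<in>G. ?t \<notin> Q'"
      proof (intro ballI notI)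
        fix Q' assume Q': "Q' \<in> G" "?t \<in> Q'"
        have P': "prime_ideal_of A Q'" using h Q'(1) unfolding height_one_prime_def by blast
        have "z * tq \<in> Q'" using idlmul2[OF prime_idl[OF P'] tq(1)] z(3) Q'(1) by blast
        hence "?t - z * tq \<in> Q'" using idldiff[OF R prime_idl[OF P'] Q'(2)] by blast
        thus False using t(3) Q'(1) by simp
      qed
      ultimately show ?thesis by blast
    qed
  qed
qed

theorem theorem4p18:
  fixes A B :: "'k::field set" and \<F> :: "'k set set"
  assumes "subring A"
    and "is_fraction_field_of A"
    and "overring A B"
    and "flat_over A B"
    and "well_centered A B"
    and "finite \<F>"
    and "\<forall>P\<in>\<F>. height_one_prime A P"
    and "A = B \<inter> (\<Inter>P\<in>\<F>. loc_prime A P)"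
  shows "is_localization A B"
proof -
  note R = assms(1) and FF = assms(2) and OV = assms(3) and FL = assms(4) and WC = assms(5)
  have RB: "subring B" and AB: "A \<subseteq> B" using OV unfolding overring_def by auto
  have eq: "B \<inter> (\<Inter>P\<in>\<F>. loc_prime A P) = A" using assms(8) by (rule sym)
  have memA: "u \<in> A" if "u \<in> B" "\<forall>Q\<in>\<F>. u \<in> loc_prime A Q" for u
  proof -
    have "u \<in> B \<inter> (\<Inter>P\<in>\<F>. loc_prime A P)" using that by blast
    thus ?thesis unfolding eq .
  qed
  define S where "S = {s \<in> A. s \<noteq> 0 \<and> inverse s \<in> B}"
  define F2 where "F2 = {Q \<in> \<F>. \<not> B \<subseteq> loc_prime A Q}"
  have finF2: "finite F2" using assms(6) unfolding F2_def by simp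
  have hF2: "height_one_prime A Q" if "Q \<in> F2" for Q using that assms(7) unfolding F2_def by blast
  have Smul: "s * s' \<in> S" if "s \<in> S" "s' \<in> S" for s s'
    using that srmul[OF R] srmul[OF RB] unfolding S_def by (auto simp: inverse_mult_distrib)
  have Spow: "s ^ n \<in> S" if "s \<in> S" for s n
    using that srpow[OF R] srpow[OF RB] unfolding S_def by (auto simp: power_inverse[symmetric])
  have S1: "1 \<in> S" using sr1[OF R] sr1[OF RB] unfolding S_def by simp
  have SQ: "\<exists>s\<in>S. s \<in> Q0" if Q0: "Q0 \<in> F2" for Q0
  proof -
    have H0: "height_one_prime A Q0" using hF2[OF Q0] .
    have P0: "prime_ideal_of A Q0" and n0: "Q0 \<noteq> {0}" using H0 unfolding height_one_prime_def by blast+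
    have I0: "ideal_of A Q0" using P0 by (rule prime_idl)
    obtain y where y: "y \<in> Q0" "y \<noteq> 0" using n0 idl0[OF I0] by blast
    have yA: "y \<in> A" using y(1) idl_sub[OF I0] by blast
    have "\<forall>Q\<in>F2. height_one_prime A Q \<and> (\<exists>t\<in>A. t \<notin> Q \<and> t / y \<in> B)"
    proof
      fix Q assume Q: "Q \<in> F2"
      have "\<not> B \<subseteq> loc_prime A Q" using Q unfolding F2_def by blast
      thus "height_one_prime A Q \<and> (\<exists>t\<in>A. t \<notin> Q \<and> t / y \<in> B)"
        using L5[OF R FF OV FL hF2[OF Q] _ yA y(2)] hF2[OF Q] by blast
    qed
    then obtain t where t: "t \<in> A" "t / y \<in> B" "\<forall>Q\<in>F2. t \<notin> Q"
      using L7[OF R OV yA y(2) finF2] by blast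
    obtain u where u: "unit_of B u" "u * (t / y) \<in> A" using WC t(2) unfolding well_centered_def by blast
    have uB: "u \<in> B" "u \<noteq> 0" "inverse u \<in> B" using u(1) unfolding unit_of_def by auto
    define a where "a = u * (t / y)"
    have aA: "a \<in> A" using u(2) unfolding a_def .
    have t0: "t \<noteq> 0" using t(3) Q0 idl0[OF I0] by auto
    have ueq: "u = (a * y) / t" unfolding a_def using t0 y(2) by (simp add: field_simps)
    have ayA: "a * y \<in> A" using srmul[OF R aA yA] .
    have "u \<in> A"
    proof (rule memA[OF uB(1)], intro ballI)
      fix Q assume Q: "Q \<in> \<F>"
      show "u \<in> loc_prime A Q"
      proof (cases "B \<subseteq> loc_prime A Q")
        case True thus ?thesis using uB(1) by blast
      next
        case False
        hence "Q \<in> F2" using Q unfolding F2_def by blast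
        hence "t \<notin> Q" using t(3) by blast
        thus ?thesis unfolding ueq using L1[OF ayA t(1)] by blast
      qed
    qed
    moreover have "u \<in> Q0"
    proof -
      have "u * t = a * y" unfolding ueq using t0 by simp
      moreover have "a * y \<in> Q0" using idlmul[OF I0 aA y(1)] .
      ultimately have "u * t \<in> Q0" by simp
      thus ?thesis using primeD[OF P0 \<open>u \<in> A\<close> t(1)] t(3) Q0 by blast
    qed
    ultimately show ?thesis using uB unfolding S_def by blast
  qed
  have ind: "G \<subseteq> F2 \<longrightarrow> (\<exists>s\<in>S. \<forall>Q\<in>G. s * b \<in> loc_prime A Q)" if G: "finite G" for G b
    using G
  proof (induction G rule: finite_induct)
    case empty show ?case using S1 by blast
  next
    case (insert Q G)
    show ?case
    proof
      assume sub: "insert Q G \<subseteq> F2"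
      obtain s1 where s1: "s1 \<in> S" "\<forall>Q'\<in>G. s1 * b \<in> loc_prime A Q'" using insert.IH sub by blast
      obtain sq where sq: "sq \<in> S" "sq \<in> Q" using SQ sub by blast
      obtain n where n: "sq ^ n * b \<in> loc_prime A Q" using L4[OF R FF hF2 sq(2)] sub by blast
      have s1A: "s1 \<in> A" and sqnA: "sq ^ n \<in> A" using s1(1) Spow[OF sq(1)] unfolding S_def by auto
      have "s1 * sq ^ n \<in> S" using Smul[OF s1(1) Spow[OF sq(1)]] .
      moreover have "s1 * sq ^ n * b \<in> loc_prime A Q"
        using L3[OF R s1A n] by (simp add: ac_simps)
      moreover have "\<forall>Q'\<in>G. s1 * sq ^ n * b \<in> loc_prime A Q'"
      proof
        fix Q' assume "Q' \<in> G"
        hence "sq ^ n * (s1 * b) \<in> loc_prime A Q'" using L3[OF R sqnA] s1(2) by blast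
        thus "s1 * sq ^ n * b \<in> loc_prime A Q'" by (simp add: ac_simps)
      qed
      ultimately show "\<exists>s\<in>S. \<forall>Q'\<in>insert Q G. s * b \<in> loc_prime A Q'" by blast
    qed
  qed
  have fin: "\<exists>s\<in>S. s * b \<in> A" if b: "b \<in> B" for b
  proof -
    obtain s where s: "s \<in> S" "\<forall>Q\<in>F2. s * b \<in> loc_prime A Q" using ind[OF finF2, of b] by blast
    have sA: "s \<in> A" using s(1) unfolding S_def by auto
    have sbB: "s * b \<in> B" using srmul[OF RB _ b] sA AB by blast
    have "s * b \<in> A"
    proof (rule memA[OF sbB], intro ballI)
      fix Q assume Q: "Q \<in> \<F>"
      show "s * b \<in> loc_prime A Q"
      proof (cases "B \<subseteq> loc_prime A Q")
        case True thus ?thesis using sbB by blast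
      next
        case False
        hence "Q \<in> F2" using Q unfolding F2_def by blast
        thus ?thesis using s(2) by blast
      qed
    qed
    thus ?thesis using s(1) by blast
  qed
  have mc: "mult_closed_nonzero A S"
    unfolding mult_closed_nonzero_def using S1 Smul unfolding S_def by blast
  have "B = loc_at A S"
  proof
    show "B \<subseteq> loc_at A S"
    proof
      fix b assume b: "b \<in> B"
      obtain s where s: "s \<in> S" "s * b \<in> A" using fin[OF b] by blast
      have "s \<noteq> 0" using s(1) unfolding S_def by auto
      hence "b = (s * b) / s" by simp
      thus "b \<in> loc_at A S" unfolding loc_at_def using s by blast
    qed
  next
    show "loc_at A S \<subseteq> B"
    proof
      fix x assume "x \<in> loc_at A S"
      then obtain a s where as: "x = a / s" "a \<in> A" "s \<in> S" unfolding loc_at_def by blast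
      have "x = a * inverse s" using as(1) by (simp add: divide_inverse)
      moreover have "inverse s \<in> B" using as(3) unfolding S_def by auto
      ultimately show "x \<in> B" using srmul[OF RB] as(2) AB by blast
    qed
  qed
  thus ?thesis unfolding is_localization_def using mc by blast
qed

end
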